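(* Let $G$ be a finite graph, let $L=\{L_v\subset \mathbb{R}:v\in V(G)\}$ be an assignment of finite lists of real numbers to the vertices of $G$, and suppose that $f:V(G)\to \mathbb{Z}$ satisfies $f(v)<|L_v|$ for every $v\in V(G)$ and $\sum_{v\in V(G)} f(v)=|E(G)|-1$. If $G$ is not $L$-colorable, then for every color $c\in\mathbb{R}$, $$\sum_{z\in V(G)} [x^{f+1_z}]\,P_G\cdot \chi_{L,c}(z) = 0.$$
   Context: An $L$-coloring of $G$ is a function $\varphi\in\prod_{v\in V(G)}L_v$ (i.e. $\varphi(v)\in L_v$ for all $v$) with $\varphi(u)\neq\varphi(v)$ for every edge $uv\in E(G)$; $G$ is $L$-colorable if an $L$-coloring exists. The graph polynomial $P_G$ is the polynomial in variables $x_v$ ($v\in V(G)$) defined by fixing an orientation $\vec G$ of $G$ and setting $P_G=\prod_{(u,v)\in E(\vec G)}(x_v-x_u)$; it is determined up to sign by $G$. For a function $g:V(G)\to\mathbb{Z}$ with nonnegative values, $x^g=\prod_{v\in V(G)}x_v^{g(v)}$, and $[x^g]\,q$ denotes the coefficient of the monomial $x^g$ in a polynomial $q$ (taken to be $0$ if $g$ has a negative value). For $z\in V(G)$, $1_z:V(G)\to\{0,1\}$ is the function with $1_z(z)=1$ and $1_z(u)=0$ for $u\neq z$. For a color $c$, the characteristic vector $\chi_{L,c}:V(G)\to\{0,1\}$ is defined by $\chi_{L,c}(v)=1$ if $c\in L_v$ and $\chi_{L,c}(v)=0$ otherwise. *)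

theory Defs
  imports Complex_Main "HOL-Library.Poly_Mapping"
begin

text \<open>Multivariate polynomials in variables indexed by v with integer coefficients:
  monomials are finitely supported exponent maps.\<close>
type_synonym 'v mpoly = "('v \<Rightarrow>\<^sub>0 nat) \<Rightarrow>\<^sub>0 int"

definition Var :: "'v \<Rightarrow> 'v mpoly" where
  "Var v = Poly_Mapping.single (Poly_Mapping.single v 1) 1"

definition simple_graph :: "'v set \<Rightarrow> 'v set set \<Rightarrow> bool" where
  "simple_graph V E \<longleftrightarrow> finite V \<and> (\<forall>e\<in>E. e \<subseteq> V \<and> card e = 2)"

definition orientation :: "'v set set \<Rightarrow> ('v \<times> 'v) set \<Rightarrow> bool" where
  "orientation E D \<longleftrightarrow> (\<forall>(u,v)\<in>D. {u,v} \<in> E) \<and>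
     (\<forall>e\<in>E. \<exists>!p. p \<in> D \<and> {fst p, snd p} = e)"

definition graph_poly :: "('v \<times> 'v) set \<Rightarrow> 'v mpoly" where
  "graph_poly D = (\<Prod>(u,v)\<in>D. Var v - Var u)"

definition coeff_mono :: "'v set \<Rightarrow> ('v \<Rightarrow> int) \<Rightarrow> 'v mpoly \<Rightarrow> int" where
  "coeff_mono V g q =
     (if \<forall>v\<in>V. 0 \<le> g v
      then Poly_Mapping.lookup q (\<Sum>v\<in>V. Poly_Mapping.single v (nat (g v)))
      else 0)"

definition indic1 :: "'v \<Rightarrow> 'v \<Rightarrow> int" where
  "indic1 z u = (if u = z then 1 else 0)"

definition chi :: "('v \<Rightarrow> 'c set) \<Rightarrow> 'c \<Rightarrow> 'v \<Rightarrow> int" where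
  "chi L c v = (if c \<in> L v then 1 else 0)"

definition L_colorable :: "'v set \<Rightarrow> 'v set set \<Rightarrow> ('v \<Rightarrow> 'c set) \<Rightarrow> bool" where
  "L_colorable V E L \<longleftrightarrow> (\<exists>\<phi>. (\<forall>v\<in>V. \<phi> v \<in> L v) \<and>
      (\<forall>u v. {u,v} \<in> E \<longrightarrow> \<phi> u \<noteq> \<phi> v))"

end

theory Submission imports Defs "HOL-Library.FuncSet" begin


definition ee :: "real set \<Rightarrow> nat \<Rightarrow> real" where
  "ee A k = (\<Sum>a\<in>A. a^k / (\<Prod>b\<in>A-{a}. a - b))"

lemma ee_rec:
  assumes "finite A" "c \<in> A"
  shows "ee A (Suc k) = c * ee A k + ee (A-{c}) k"
proof -
  have "ee A (Suc k) - c * ee A k = (\<Sum>a\<in>A. a^k * (a - c) / (\<Prod>b\<in>A-{a}. a - b))"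
    unfolding ee_def sum_distrib_left sum_subtractf[symmetric]
    by (rule sum.cong) (auto simp: algebra_simps diff_divide_distrib)
  also have "\<dots> = (\<Sum>a\<in>A-{c}. a^k * (a - c) / (\<Prod>b\<in>A-{a}. a - b))"
    using assms by (subst sum.remove[of A c]) auto
  also have "\<dots> = (\<Sum>a\<in>A-{c}. a^k / (\<Prod>b\<in>A-{c}-{a}. a - b))"
  proof (rule sum.cong)
    fix a assume a: "a \<in> A - {c}"
    have "(\<Prod>b\<in>A-{a}. a - b) = (a - c) * (\<Prod>b\<in>A-{a}-{c}. a - b)"
      using assms a by (subst prod.remove[of "A-{a}" c]) auto
    also have "A-{a}-{c} = A-{c}-{a}" by auto
    finally show "a^k * (a - c) / (\<Prod>b\<in>A-{a}. a - b) = a^k / (\<Prod>b\<in>A-{c}-{a}. a - b)"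
      using a by simp
  qed simp
  finally show ?thesis unfolding ee_def by simp
qed

lemma ee_main:
  assumes "finite A" "card A = Suc n"
  shows "ee A n = 1 \<and> ee A (Suc n) = \<Sum>A \<and> (\<forall>k<n. ee A k = 0)"
  using assms
proof (induction n arbitrary: A)
  case 0
  then obtain a where "A = {a}" by (metis One_nat_def card_1_singletonE)
  then show ?case by (simp add: ee_def)
next
  case (Suc n)
  from Suc.prems obtain c where c: "c \<in> A" by (metis card.empty ex_in_conv nat.distinct(1))
  have "card (A-{c}) = Suc n" using Suc.prems c by simp
  then obtain d where d: "d \<in> A-{c}" by (metis card.empty ex_in_conv nat.distinct(1))
  have cd: "c \<in> A" "d \<in> A" "c \<noteq> d" using c d by auto
  have cA: "card (A-{c}) = Suc n" "card (A-{d}) = Suc n" using Suc.prems cd by auto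
  have IHc: "ee (A-{c}) n = 1 \<and> ee (A-{c}) (Suc n) = \<Sum>(A-{c}) \<and> (\<forall>k<n. ee (A-{c}) k = 0)"
    using Suc.IH[of "A-{c}"] Suc.prems cA by auto
  have IHd: "ee (A-{d}) n = 1 \<and> ee (A-{d}) (Suc n) = \<Sum>(A-{d}) \<and> (\<forall>k<n. ee (A-{d}) k = 0)"
    using Suc.IH[of "A-{d}"] Suc.prems cA by auto
  have diff: "(c - d) * ee A k = ee (A-{d}) k - ee (A-{c}) k" for k
    using ee_rec[OF Suc.prems(1) cd(1), of k] ee_rec[OF Suc.prems(1) cd(2), of k]
    by (simp add: algebra_simps)
  have low: "ee A k = 0" if "k \<le> n" for k
  proof -
    have "ee (A-{d}) k = ee (A-{c}) k"
      using IHc IHd that by (cases "k = n") auto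
    then show ?thesis using diff[of k] cd by simp
  qed
  have sA: "\<Sum>(A-{d}) - \<Sum>(A-{c}) = c - d"
    using Suc.prems(1) cd by (simp add: sum_diff1)
  have mid: "ee A (Suc n) = 1"
    using diff[of "Suc n"] IHc IHd sA cd by simp
  have top: "ee A (Suc (Suc n)) = \<Sum>A"
    using ee_rec[OF Suc.prems(1) cd(1), of "Suc n"] mid IHc Suc.prems(1) cd
    by (simp add: sum_diff1)
  show ?case using low mid top by auto
qed

definition ms :: "('v \<times> 'v) set \<Rightarrow> ('v \<times> 'v) set \<Rightarrow> ('v \<Rightarrow>\<^sub>0 nat)" where
  "ms D S = (\<Sum>d\<in>S. Poly_Mapping.single (snd d) 1) + (\<Sum>d\<in>D-S. Poly_Mapping.single (fst d) 1)"

lemma prod_single: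
  "finite S \<Longrightarrow> (\<Prod>d\<in>S. Poly_Mapping.single (h d) (c d :: int)) = Poly_Mapping.single (\<Sum>d\<in>S. h d) (\<Prod>d\<in>S. c d)"
  by (induction S rule: finite_induct) (auto simp: mult_single)

lemma gp_expand:
  assumes "finite D"
  shows "graph_poly D = (\<Sum>S\<in>Pow D. Poly_Mapping.single (ms D S) ((-1)^card(D-S)))"
proof -
  have "graph_poly D = (\<Prod>d\<in>D. Var (snd d) + (- Var (fst d)))"
    unfolding graph_poly_def by (rule prod.cong) auto
  also have "\<dots> = (\<Sum>S\<in>Pow D. (\<Prod>d\<in>S. Var (snd d)) * (\<Prod>d\<in>D-S. - Var (fst d)))"
    by (rule prod_add[OF assms])
  also have "\<dots> = (\<Sum>S\<in>Pow D. Poly_Mapping.single (ms D S) ((-1)^card(D-S)))"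
  proof (rule sum.cong)
    fix S assume S: "S \<in> Pow D"
    have fS: "finite S" "finite (D-S)" using S assms finite_subset by auto
    have "(\<Prod>d\<in>S. Var (snd d)) = Poly_Mapping.single (\<Sum>d\<in>S. Poly_Mapping.single (snd d) 1) 1"
      unfolding Var_def using prod_single[OF fS(1), of "\<lambda>d. Poly_Mapping.single (snd d) 1" "\<lambda>_. 1"] by (simp only: prod.neutral_const)
    moreover have "(\<Prod>d\<in>D-S. - Var (fst d)) = Poly_Mapping.single (\<Sum>d\<in>D-S. Poly_Mapping.single (fst d) 1) ((-1)^card(D-S))"
      unfolding Var_def single_uminus[symmetric] using prod_single[OF fS(2), of "\<lambda>d. Poly_Mapping.single (fst d) 1" "\<lambda>_. -1"] by (simp only: prod_constant)
    ultimately show "(\<Prod>d\<in>S. Var (snd d)) * (\<Prod>d\<in>D-S. - Var (fst d)) = Poly_Mapping.single (ms D S) ((-1)^card(D-S))"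
      by (simp add: mult_single ms_def)
  qed simp
  finally show ?thesis .
qed

lemma lookup_gp:
  assumes "finite D"
  shows "Poly_Mapping.lookup (graph_poly D) M = (\<Sum>S\<in>Pow D. if ms D S = M then (-1)^card(D-S) else 0)"
  unfolding gp_expand[OF assms] lookup_sum by (simp add: lookup_single when_def)

definition mev :: "'v set \<Rightarrow> ('v \<Rightarrow> real) \<Rightarrow> ('v \<Rightarrow>\<^sub>0 nat) \<Rightarrow> real" where
  "mev V a m = (\<Prod>v\<in>V. a v ^ Poly_Mapping.lookup m v)"

lemma mev_add: "mev V a (m + n) = mev V a m * mev V a n"
  unfolding mev_def lookup_add power_add prod.distrib ..

lemma mev_zero: "mev V a 0 = 1"
  unfolding mev_def by simp

lemma mev_single: "finite V \<Longrightarrow> v \<in> V \<Longrightarrow> mev V a (Poly_Mapping.single v 1) = a v"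
  unfolding mev_def lookup_single when_def
  by (simp add: if_distrib[where f="\<lambda>k. _ ^ k"] prod.If_cases Int_absorb1 cong: if_cong)

lemma mev_single': "finite V \<Longrightarrow> v \<in> V \<Longrightarrow> mev V a (Poly_Mapping.single v (Suc 0)) = a v"
  using mev_single by simp

lemma mev_sum: "finite S \<Longrightarrow> mev V a (\<Sum>d\<in>S. h d) = (\<Prod>d\<in>S. mev V a (h d))"
  by (induction S rule: finite_induct) (auto simp: mev_add mev_zero)

lemma real_expand:
  assumes "finite V" "finite D" "D \<subseteq> V \<times> V"
  shows "(\<Prod>d\<in>D. a (snd d) - a (fst d)) = (\<Sum>S\<in>Pow D. (-1)^card(D-S) * mev V a (ms D S))"
proof -
  have "(\<Prod>d\<in>D. a (snd d) - a (fst d)) = (\<Prod>d\<in>D. a (snd d) + (- a (fst d)))" by simp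
  also have "\<dots> = (\<Sum>S\<in>Pow D. (\<Prod>d\<in>S. a (snd d)) * (\<Prod>d\<in>D-S. - a (fst d)))"
    by (rule prod_add[OF assms(2)])
  also have "\<dots> = (\<Sum>S\<in>Pow D. (-1)^card(D-S) * mev V a (ms D S))"
  proof (rule sum.cong)
    fix S assume S: "S \<in> Pow D"
    have fS: "finite S" "finite (D-S)" using S assms finite_subset by auto
    have 1: "mev V a (\<Sum>d\<in>S. Poly_Mapping.single (snd d) 1) = (\<Prod>d\<in>S. a (snd d))"
      unfolding mev_sum[OF fS(1)] using S assms by (intro prod.cong) (auto simp: mev_single mev_single')
    have 2: "mev V a (\<Sum>d\<in>D-S. Poly_Mapping.single (fst d) 1) = (\<Prod>d\<in>D-S. a (fst d))"
      unfolding mev_sum[OF fS(2)] using S assms by (intro prod.cong) (auto simp: mev_single mev_single')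
    have 3: "(\<Prod>d\<in>D-S. - a (fst d)) = (-1)^card(D-S) * (\<Prod>d\<in>D-S. a (fst d))"
      using prod.distrib[of "\<lambda>_. -1::real" "\<lambda>d. a (fst d)" "D-S"] by (simp add: prod_constant)
    show "(\<Prod>d\<in>S. a (snd d)) * (\<Prod>d\<in>D-S. - a (fst d)) = (-1)^card(D-S) * mev V a (ms D S)"
      unfolding ms_def mev_add 1 2 3 by simp
  qed simp
  finally show ?thesis .
qed

lemma grid_core:
  assumes V: "finite V" and D: "finite D" "D \<subseteq> V \<times> V"
    and A: "\<forall>v\<in>V. finite (A v)"
    and nc: "\<forall>a\<in>PiE V A. \<exists>p\<in>D. a (fst p) = a (snd p)"
  shows "(\<Sum>S\<in>Pow D. (-1)^card(D-S) * (\<Prod>v\<in>V. ee (A v) (Poly_Mapping.lookup (ms D S) v))) = 0"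
proof -
  define w where "w v x = 1 / (\<Prod>b\<in>A v-{x}. x - b)" for v x
  have "0 = (\<Sum>a\<in>PiE V A. (\<Prod>v\<in>V. w v (a v)) * (\<Prod>d\<in>D. a (snd d) - a (fst d)))"
  proof (rule sum.neutral[symmetric], rule ballI)
    fix a assume "a \<in> PiE V A"
    then obtain p where "p \<in> D" "a (fst p) = a (snd p)" using nc by blast
    then have "(\<Prod>d\<in>D. a (snd d) - a (fst d)) = 0" using D by (intro prod_zero) (auto intro!: bexI[of _ p])
    then show "(\<Prod>v\<in>V. w v (a v)) * (\<Prod>d\<in>D. a (snd d) - a (fst d)) = 0" by simp
  qed
  also have "\<dots> = (\<Sum>a\<in>PiE V A. \<Sum>S\<in>Pow D. (-1)^card(D-S) * (\<Prod>v\<in>V. w v (a v) * a v ^ Poly_Mapping.lookup (ms D S) v))"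
    unfolding real_expand[OF V D] sum_distrib_left mev_def prod.distrib
    by (simp add: algebra_simps)
  also have "\<dots> = (\<Sum>S\<in>Pow D. (-1)^card(D-S) * (\<Sum>a\<in>PiE V A. \<Prod>v\<in>V. w v (a v) * a v ^ Poly_Mapping.lookup (ms D S) v))"
    by (subst sum.swap) (simp add: sum_distrib_left)
  also have "\<dots> = (\<Sum>S\<in>Pow D. (-1)^card(D-S) * (\<Prod>v\<in>V. \<Sum>x\<in>A v. w v x * x ^ Poly_Mapping.lookup (ms D S) v))"
  proof (rule sum.cong[OF refl])
    fix S
    show "(-1)^card(D-S) * (\<Sum>a\<in>PiE V A. \<Prod>v\<in>V. w v (a v) * a v ^ Poly_Mapping.lookup (ms D S) v) = (-1)^card(D-S) * (\<Prod>v\<in>V. \<Sum>x\<in>A v. w v x * x ^ Poly_Mapping.lookup (ms D S) v)"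
      using prod_sum_PiE[OF V, of A "\<lambda>v x. w v x * x ^ Poly_Mapping.lookup (ms D S) v"] A by simp
  qed
  also have "\<dots> = (\<Sum>S\<in>Pow D. (-1)^card(D-S) * (\<Prod>v\<in>V. ee (A v) (Poly_Mapping.lookup (ms D S) v)))"
    unfolding ee_def w_def by simp
  finally show ?thesis by simp
qed

definition Mono :: "'v set \<Rightarrow> ('v \<Rightarrow> nat) \<Rightarrow> ('v \<Rightarrow>\<^sub>0 nat)" where
  "Mono V t = (\<Sum>v\<in>V. Poly_Mapping.single v (t v))"

lemma lookup_Mono: "finite V \<Longrightarrow> Poly_Mapping.lookup (Mono V t) x = (if x \<in> V then t x else 0)"
  unfolding Mono_def lookup_sum lookup_single when_def
  by (simp add: sum.delta)

lemma ms_out: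
  assumes "finite D" "D \<subseteq> V \<times> V" "S \<subseteq> D" "x \<notin> V"
  shows "Poly_Mapping.lookup (ms D S) x = 0"
proof -
  have "\<forall>d\<in>D. snd d \<noteq> x \<and> fst d \<noteq> x" using assms by auto
  then show ?thesis unfolding ms_def lookup_add lookup_sum lookup_single when_def
    using assms(3) by (force intro!: sum.neutral)
qed

lemma card_sum_aux:
  assumes "finite V" "finite S" "h ` S \<subseteq> V"
  shows "(\<Sum>v\<in>V. Poly_Mapping.lookup (\<Sum>d\<in>S. Poly_Mapping.single (h d) (1::nat)) v) = card S"
proof -
  have "(\<Sum>v\<in>V. Poly_Mapping.lookup (\<Sum>d\<in>S. Poly_Mapping.single (h d) (1::nat)) v)
      = (\<Sum>v\<in>V. \<Sum>d\<in>S. if h d = v then 1 else 0)"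
    unfolding lookup_sum lookup_single when_def by simp
  also have "\<dots> = (\<Sum>d\<in>S. \<Sum>v\<in>V. if h d = v then 1 else 0)" by (rule sum.swap)
  also have "\<dots> = (\<Sum>d\<in>S. 1)" using assms by (intro sum.cong) (auto simp: sum.delta)
  finally show ?thesis by simp
qed

lemma ms_total:
  assumes "finite V" "finite D" "D \<subseteq> V \<times> V" "S \<subseteq> D"
  shows "(\<Sum>v\<in>V. Poly_Mapping.lookup (ms D S) v) = card D"
proof -
  have f: "finite S" "finite (D-S)" using assms finite_subset by auto
  have "(\<Sum>v\<in>V. Poly_Mapping.lookup (ms D S) v) = card S + card (D - S)"
    unfolding ms_def lookup_add sum.distrib
    using card_sum_aux[OF assms(1) f(1), of snd] card_sum_aux[OF assms(1) f(2), of fst] assms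
    by force
  also have "\<dots> = card D" using assms card_Diff_subset[of S D] card_mono[of D S] f by simp
  finally show ?thesis .
qed

lemma ms_eq_Mono:
  assumes "finite V" "finite D" "D \<subseteq> V \<times> V" "S \<subseteq> D"
  shows "ms D S = Mono V t \<longleftrightarrow> (\<forall>v\<in>V. Poly_Mapping.lookup (ms D S) v = t v)"
proof
  assume "\<forall>v\<in>V. Poly_Mapping.lookup (ms D S) v = t v"
  then show "ms D S = Mono V t"
    using ms_out[OF assms(2,3,4)] lookup_Mono[OF assms(1)]
    by (intro poly_mapping_eqI) auto
qed (use lookup_Mono[OF assms(1)] in auto)

lemma nat_sum_one:
  fixes d :: "'a \<Rightarrow> nat"
  assumes "finite V" "(\<Sum>v\<in>V. d v) = 1"
  shows "\<exists>z\<in>V. d z = 1 \<and> (\<forall>v\<in>V-{z}. d v = 0)"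
proof -
  obtain z where z: "z \<in> V" "d z \<noteq> 0" using assms by (metis sum.neutral zero_neq_one)
  have "d z + (\<Sum>v\<in>V-{z}. d v) = 1" using assms z by (simp add: sum.remove)
  then have "d z = 1" "(\<Sum>v\<in>V-{z}. d v) = 0" using z by auto
  then show ?thesis using z assms by auto
qed

lemma grid_zero:
  fixes A :: "'v \<Rightarrow> real set"
  assumes V: "finite V" and D: "finite D" "D \<subseteq> V \<times> V"
    and A: "\<forall>v\<in>V. finite (A v) \<and> card (A v) = Suc (t v)"
    and tot: "(\<Sum>v\<in>V. t v) = card D"
    and nc: "\<forall>a\<in>PiE V A. \<exists>p\<in>D. a (fst p) = a (snd p)"
  shows "Poly_Mapping.lookup (graph_poly D) (Mono V t) = 0"
proof -
  have key: "(\<Prod>v\<in>V. ee (A v) (Poly_Mapping.lookup (ms D S) v)) = (if ms D S = Mono V t then 1 else 0)"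
    if S: "S \<in> Pow D" for S
  proof (cases "ms D S = Mono V t")
    case True
    then have "\<forall>v\<in>V. Poly_Mapping.lookup (ms D S) v = t v" using ms_eq_Mono[OF V D, of S] S by auto
    then show ?thesis using True A ee_main by simp
  next
    case False
    have "\<exists>v\<in>V. Poly_Mapping.lookup (ms D S) v < t v"
    proof (rule ccontr)
      assume "\<not> ?thesis"
      then have le: "\<forall>v\<in>V. t v \<le> Poly_Mapping.lookup (ms D S) v" by auto
      have "\<forall>v\<in>V. Poly_Mapping.lookup (ms D S) v = t v"
      proof (rule ccontr)
        assume "\<not> ?thesis"
        then obtain v where "v \<in> V" "t v < Poly_Mapping.lookup (ms D S) v" using le by force
        then have "(\<Sum>v\<in>V. t v) < (\<Sum>v\<in>V. Poly_Mapping.lookup (ms D S) v)"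
          using le V by (intro sum_strict_mono_ex1) auto
        then show False using ms_total[OF V D, of S] S tot by simp
      qed
      then show False using False ms_eq_Mono[OF V D, of S] S by auto
    qed
    then obtain v where v: "v \<in> V" "Poly_Mapping.lookup (ms D S) v < t v" by blast
    then have "ee (A v) (Poly_Mapping.lookup (ms D S) v) = 0" using A ee_main by blast
    then show ?thesis using False v V by (simp add: prod_zero bexI[of _ v])
  qed
  have "0 = (\<Sum>S\<in>Pow D. (-1)^card(D-S) * (\<Prod>v\<in>V. ee (A v) (Poly_Mapping.lookup (ms D S) v)))"
    using grid_core[OF V D _ nc] A by simp
  also have "\<dots> = (\<Sum>S\<in>Pow D. real_of_int (if ms D S = Mono V t then (-1)^card(D-S) else 0))"
    by (rule sum.cong) (auto simp: key)
  also have "\<dots> = real_of_int (Poly_Mapping.lookup (graph_poly D) (Mono V t))"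
    unfolding lookup_gp[OF D(1)] of_int_sum ..
  finally show ?thesis by simp
qed

lemma grid_one:
  fixes A :: "'v \<Rightarrow> real set"
  assumes V: "finite V" and D: "finite D" "D \<subseteq> V \<times> V"
    and A: "\<forall>v\<in>V. finite (A v) \<and> card (A v) = Suc (t v)"
    and tot: "(\<Sum>v\<in>V. t v) + 1 = card D"
    and nc: "\<forall>a\<in>PiE V A. \<exists>p\<in>D. a (fst p) = a (snd p)"
  shows "(\<Sum>z\<in>V. real_of_int (Poly_Mapping.lookup (graph_poly D) (Mono V (\<lambda>v. t v + (if v = z then 1 else 0)))) * \<Sum>(A z)) = 0"
proof -
  define T where "T z = (\<lambda>v. t v + (if v = z then 1 else 0))" for z
  have key: "(\<Prod>v\<in>V. ee (A v) (Poly_Mapping.lookup (ms D S) v)) = (\<Sum>z\<in>V. if ms D S = Mono V (T z) then \<Sum>(A z) else 0)"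
    if S: "S \<in> Pow D" for S
  proof (cases "\<exists>z\<in>V. ms D S = Mono V (T z)")
    case True
    then obtain z where z: "z \<in> V" "ms D S = Mono V (T z)" by blast
    then have n: "\<forall>v\<in>V. Poly_Mapping.lookup (ms D S) v = T z v" using ms_eq_Mono[OF V D, of S] S by auto
    have "(\<Prod>v\<in>V. ee (A v) (Poly_Mapping.lookup (ms D S) v)) = ee (A z) (Suc (t z)) * (\<Prod>v\<in>V-{z}. ee (A v) (t v))"
      using z V n by (simp add: prod.remove T_def)
    also have "\<dots> = \<Sum>(A z)" using A ee_main z by simp
    finally have L: "(\<Prod>v\<in>V. ee (A v) (Poly_Mapping.lookup (ms D S) v)) = \<Sum>(A z)" .
    have "\<forall>z'\<in>V. (ms D S = Mono V (T z')) \<longleftrightarrow> z' = z"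
    proof
      fix z' assume z': "z' \<in> V"
      show "(ms D S = Mono V (T z')) \<longleftrightarrow> z' = z"
      proof
        assume "ms D S = Mono V (T z')"
        then have "Poly_Mapping.lookup (Mono V (T z')) z = Poly_Mapping.lookup (Mono V (T z)) z"
          using z by simp
        then show "z' = z" using lookup_Mono[OF V] z z' by (auto simp: T_def split: if_splits)
      qed (use z in simp)
    qed
    then have "(\<Sum>z'\<in>V. if ms D S = Mono V (T z') then \<Sum>(A z') else 0) = (\<Sum>z'\<in>V. if z' = z then \<Sum>(A z') else 0)"
      by (intro sum.cong) auto
    also have "\<dots> = \<Sum>(A z)" using z V by (simp add: sum.delta')
    finally show ?thesis using L by simp
  next
    case False
    have "\<exists>v\<in>V. Poly_Mapping.lookup (ms D S) v < t v"
    proof (rule ccontr)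
      assume "\<not> ?thesis"
      then have le: "\<forall>v\<in>V. t v \<le> Poly_Mapping.lookup (ms D S) v" by auto
      have "(\<Sum>v\<in>V. Poly_Mapping.lookup (ms D S) v - t v) = (\<Sum>v\<in>V. Poly_Mapping.lookup (ms D S) v) - (\<Sum>v\<in>V. t v)"
        using le by (intro sum_subtractf_nat) auto
      also have "\<dots> = 1" using ms_total[OF V D, of S] S tot by simp
      finally obtain z where z: "z \<in> V" "Poly_Mapping.lookup (ms D S) z - t z = 1"
          "\<forall>v\<in>V-{z}. Poly_Mapping.lookup (ms D S) v - t v = 0"
        using nat_sum_one[OF V] by blast
      have "\<forall>v\<in>V. Poly_Mapping.lookup (ms D S) v = T z v"
      proof
        fix v assume v: "v \<in> V"
        show "Poly_Mapping.lookup (ms D S) v = T z v"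
        proof (cases "v = z")
          case True then show ?thesis using z le v by (simp add: T_def)
        next
          case False
          then have "Poly_Mapping.lookup (ms D S) v - t v = 0" using z v by blast
          moreover have "t v \<le> Poly_Mapping.lookup (ms D S) v" using le v by blast
          ultimately show ?thesis using False by (simp add: T_def)
        qed
      qed
      then show False using False ms_eq_Mono[OF V D, of S] S z by auto
    qed
    then obtain v where v: "v \<in> V" "Poly_Mapping.lookup (ms D S) v < t v" by blast
    then have "ee (A v) (Poly_Mapping.lookup (ms D S) v) = 0" using A ee_main by blast
    then show ?thesis using False v V by (simp add: prod_zero bexI[of _ v])
  qed
  have "0 = (\<Sum>S\<in>Pow D. (-1)^card(D-S) * (\<Prod>v\<in>V. ee (A v) (Poly_Mapping.lookup (ms D S) v)))"
    using grid_core[OF V D _ nc] A by simp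
  also have "\<dots> = (\<Sum>S\<in>Pow D. \<Sum>z\<in>V. (if ms D S = Mono V (T z) then (-1)^card(D-S) else 0) * \<Sum>(A z))"
    by (rule sum.cong) (auto simp: key sum_distrib_left intro!: sum.cong)
  also have "\<dots> = (\<Sum>z\<in>V. (\<Sum>S\<in>Pow D. (if ms D S = Mono V (T z) then (-1)^card(D-S) else 0)) * \<Sum>(A z))"
    by (subst sum.swap) (simp add: sum_distrib_right)
  also have "\<dots> = (\<Sum>z\<in>V. real_of_int (Poly_Mapping.lookup (graph_poly D) (Mono V (T z))) * \<Sum>(A z))"
    unfolding lookup_gp[OF D(1)] of_int_sum by (auto intro!: sum.cong)
  finally show ?thesis unfolding T_def by simp
qed

lemma nocol:
  assumes G: "simple_graph V E" and O: "orientation E D" and nL: "\<not> L_colorable V E L"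
    and h: "\<forall>v\<in>V. \<forall>y\<in>A v. h y \<in> L v" and inj: "inj_on h (\<Union>v\<in>V. A v)"
  shows "\<forall>a\<in>PiE V A. \<exists>p\<in>D. a (fst p) = a (snd p)"
proof
  fix a assume a: "a \<in> PiE V A"
  have "\<forall>v\<in>V. h (a v) \<in> L v" using a h by auto
  then obtain u v where uv: "{u,v} \<in> E" "h (a u) = h (a v)"
    using nL unfolding L_colorable_def by auto
  have "u \<in> V" "v \<in> V" using uv G unfolding simple_graph_def by auto
  then have "a u \<in> (\<Union>v\<in>V. A v)" "a v \<in> (\<Union>v\<in>V. A v)" using a by (auto simp: PiE_iff)
  then have "a u = a v" using inj_onD[OF inj uv(2)] by blast
  have "\<forall>e\<in>E. \<exists>!p. p \<in> D \<and> {fst p, snd p} = e" using O unfolding orientation_def by (rule conjunct2)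
  then have "\<exists>!p. p \<in> D \<and> {fst p, snd p} = {u,v}" using uv(1) by (rule bspec)
  then have "\<exists>p. p \<in> D \<and> {fst p, snd p} = {u,v}" by (rule ex1_implies_ex)
  then obtain p where pp: "p \<in> D \<and> {fst p, snd p} = {u,v}" ..
  then have p: "p \<in> D" "{fst p, snd p} = {u,v}" by simp_all
  then have "a (fst p) = a (snd p)" using \<open>a u = a v\<close> by (auto simp: doubleton_eq_iff)
  then show "\<exists>p\<in>D. a (fst p) = a (snd p)" using p by blast
qed

lemma graph_facts:
  assumes G: "simple_graph V E" and O: "orientation E D"
  shows "finite V" "D \<subseteq> V \<times> V" "finite D" "card D = card E"
proof -
  have O1: "\<forall>(u,v)\<in>D. {u,v} \<in> E" using O unfolding orientation_def by (rule conjunct1)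
  have O2: "\<forall>e\<in>E. \<exists>!p. p \<in> D \<and> {fst p, snd p} = e" using O unfolding orientation_def by (rule conjunct2)
  have DE: "{fst p, snd p} \<in> E" if "p \<in> D" for p
  proof -
    obtain x y where "p = (x,y)" by (cases p)
    then show ?thesis using O1 that by auto
  qed
  show V: "finite V" using G unfolding simple_graph_def by auto
  show DV: "D \<subseteq> V \<times> V"
  proof
    fix p assume "p \<in> D"
    then have "{fst p, snd p} \<in> E" by (rule DE)
    then have "{fst p, snd p} \<subseteq> V" using G unfolding simple_graph_def by blast
    then show "p \<in> V \<times> V" by (cases p) auto
  qed
  show "finite D" using DV V finite_subset by blast
  have "bij_betw (\<lambda>p. {fst p, snd p}) D E"
    unfolding bij_betw_def
  proof
    show "inj_on (\<lambda>p. {fst p, snd p}) D"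
    proof (rule inj_onI)
      fix p q assume pq: "p \<in> D" "q \<in> D" "{fst p, snd p} = {fst q, snd q}"
      have "\<exists>!r. r \<in> D \<and> {fst r, snd r} = {fst p, snd p}" using O2 DE[OF pq(1)] by (rule bspec)
      then show "p = q" using pq by (metis (no_types, lifting))
    qed
    show "(\<lambda>p. {fst p, snd p}) ` D = E"
    proof
      show "(\<lambda>p. {fst p, snd p}) ` D \<subseteq> E" using DE by blast
      show "E \<subseteq> (\<lambda>p. {fst p, snd p}) ` D"
      proof
        fix e assume "e \<in> E"
        with O2 have "\<exists>!p. p \<in> D \<and> {fst p, snd p} = e" by (rule bspec)
        then have "\<exists>p. p \<in> D \<and> {fst p, snd p} = e" by (rule ex1_implies_ex)
        then obtain p where "p \<in> D \<and> {fst p, snd p} = e" ..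
        then show "e \<in> (\<lambda>p. {fst p, snd p}) ` D" by blast
      qed
    qed
  qed
  then show "card D = card E" by (rule bij_betw_same_card)
qed

lemma pick_subset:
  assumes "finite L" "Suc n \<le> card L"
  shows "\<exists>B\<subseteq>L. finite B \<and> card B = Suc n \<and> (c \<in> B \<longleftrightarrow> c \<in> L)"
proof (cases "c \<in> L")
  case True
  have "n \<le> card (L - {c})" using assms True by simp
  then obtain T where T: "T \<subseteq> L - {c}" "card T = n" "finite T" by (rule obtain_subset_with_card_n)
  moreover have "c \<notin> T" using T by auto
  ultimately show ?thesis using True by (intro exI[of _ "insert c T"]) auto
next
  case False
  obtain T where T: "T \<subseteq> L" "card T = Suc n" "finite T" using assms(2) by (rule obtain_subset_with_card_n)
  then show ?thesis using False by (intro exI[of _ T]) auto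
qed

lemma coeff_mono_Mono:
  assumes "\<forall>v\<in>V. 0 \<le> g v"
  shows "coeff_mono V g q = Poly_Mapping.lookup q (Mono V (\<lambda>v. nat (g v)))"
  using assms unfolding coeff_mono_def Mono_def by simp

theorem theorem5:
  fixes V :: "'v set" and E :: "'v set set" and D :: "('v \<times> 'v) set"
    and L :: "'v \<Rightarrow> real set" and f :: "'v \<Rightarrow> int"
  assumes "simple_graph V E"
    and "orientation E D"
    and "\<forall>v\<in>V. finite (L v)"
    and "\<forall>v\<in>V. f v < int (card (L v))"
    and "(\<Sum>v\<in>V. f v) = int (card E) - 1"
    and "\<not> L_colorable V E L"
  shows "\<forall>c::real. (\<Sum>z\<in>V. coeff_mono V (\<lambda>u. f u + indic1 z u) (graph_poly D) * chi L c z) = 0"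
proof
  fix c :: real
  note G = assms(1) and O = assms(2) and Lfin = assms(3) and fL = assms(4) and sf = assms(5) and nL = assms(6)
  note gf = graph_facts[OF G O]
  have ind_sum: "(\<Sum>v\<in>V. indic1 z v) = 1" if "z \<in> V" for z
    using that gf(1) unfolding indic1_def by (simp add: sum.delta')
  show "(\<Sum>z\<in>V. coeff_mono V (\<lambda>u. f u + indic1 z u) (graph_poly D) * chi L c z) = 0"
  proof (cases "\<exists>v0\<in>V. f v0 < 0")
    case True
    then obtain v0 where v0: "v0 \<in> V" "f v0 < 0" by blast
    have "coeff_mono V (\<lambda>u. f u + indic1 z u) (graph_poly D) * chi L c z = 0" if z: "z \<in> V" for z
    proof (cases "\<forall>w\<in>V. 0 \<le> f w + indic1 z w")
      case False
      then show ?thesis unfolding coeff_mono_def by auto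
    next
      case nonneg: True
      show ?thesis
      proof (cases "c \<in> L z")
        case False then show ?thesis by (simp add: chi_def)
      next
        case cL: True
        define t where "t w = nat (f w + indic1 z w)" for w
        have tle: "Suc (t w) \<le> card (L w)" if w: "w \<in> V" for w
        proof (cases "w = z")
          case True
          have "v0 = z"
          proof (rule ccontr)
            assume "v0 \<noteq> z"
            then have "0 \<le> f v0" using nonneg v0 unfolding indic1_def by force
            then show False using v0 by simp
          qed
          then have "f w + indic1 z w = 0" using v0 nonneg w True unfolding indic1_def by force
          moreover have "card (L w) > 0" using cL True Lfin w by (auto simp: card_gt_0_iff)
          ultimately show ?thesis unfolding t_def by simp
        next
          case False
          then have "0 \<le> f w" "f w < int (card (L w))" using fL w nonneg unfolding indic1_def by force+
          then show ?thesis using False unfolding t_def indic1_def by simp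
        qed
        have "\<forall>w\<in>V. \<exists>B\<subseteq>L w. finite B \<and> card B = Suc (t w) \<and> (c \<in> B \<longleftrightarrow> c \<in> L w)"
        proof
          fix w assume w: "w \<in> V"
          show "\<exists>B\<subseteq>L w. finite B \<and> card B = Suc (t w) \<and> (c \<in> B \<longleftrightarrow> c \<in> L w)"
            using pick_subset[OF _ tle[OF w]] Lfin w by blast
        qed
        from bchoice[OF this] obtain A where A: "\<forall>w\<in>V. A w \<subseteq> L w \<and> finite (A w) \<and> card (A w) = Suc (t w)"
          by blast
        have "int (\<Sum>w\<in>V. t w) = (\<Sum>w\<in>V. f w + indic1 z w)"
          unfolding of_nat_sum t_def using nonneg by (intro sum.cong) auto
        also have "\<dots> = int (card D)" using sf ind_sum[OF z] gf(4) by (simp add: sum.distrib)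
        finally have tot: "(\<Sum>w\<in>V. t w) = card D" by linarith
        have nc: "\<forall>a\<in>PiE V A. \<exists>p\<in>D. a (fst p) = a (snd p)"
          by (rule nocol[OF G O nL, of A id]) (use A in auto)
        have "Poly_Mapping.lookup (graph_poly D) (Mono V t) = 0"
          by (rule grid_zero[OF gf(1) gf(3) gf(2) _ tot nc]) (use A in auto)
        then have "coeff_mono V (\<lambda>u. f u + indic1 z u) (graph_poly D) = 0"
          using coeff_mono_Mono[OF nonneg] unfolding t_def by simp
        then show ?thesis by simp
      qed
    qed
    then show ?thesis by (intro sum.neutral ballI)
  next
    case False
    then have fnn: "\<forall>v\<in>V. 0 \<le> f v" by auto
    define t where "t w = nat (f w)" for w
    define k where "k z = real_of_int (Poly_Mapping.lookup (graph_poly D) (Mono V (\<lambda>v. t v + (if v = z then 1 else 0))))" for z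
    have coeff: "coeff_mono V (\<lambda>u. f u + indic1 z u) (graph_poly D) = Poly_Mapping.lookup (graph_poly D) (Mono V (\<lambda>v. t v + (if v = z then 1 else 0)))" for z
    proof -
      have nn: "\<forall>v\<in>V. 0 \<le> f v + indic1 z v" using fnn unfolding indic1_def by auto
      have "Mono V (\<lambda>v. nat (f v + indic1 z v)) = Mono V (\<lambda>v. t v + (if v = z then 1 else 0))"
        unfolding Mono_def t_def indic1_def using fnn by (intro sum.cong) (auto simp: nat_add_distrib)
      then show ?thesis using coeff_mono_Mono[OF nn] by simp
    qed
    have tle: "Suc (t w) \<le> card (L w)" if "w \<in> V" for w
    proof -
      have "0 \<le> f w" "f w < int (card (L w))" using fL fnn that by blast+
      then show ?thesis unfolding t_def by simp
    qed
    have "\<forall>w\<in>V. \<exists>B\<subseteq>L w. finite B \<and> card B = Suc (t w) \<and> (c \<in> B \<longleftrightarrow> c \<in> L w)"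
    proof
      fix w assume w: "w \<in> V"
      show "\<exists>B\<subseteq>L w. finite B \<and> card B = Suc (t w) \<and> (c \<in> B \<longleftrightarrow> c \<in> L w)"
        using pick_subset[OF _ tle[OF w]] Lfin w by blast
    qed
    from bchoice[OF this] obtain A where A: "\<forall>w\<in>V. A w \<subseteq> L w \<and> finite (A w) \<and> card (A w) = Suc (t w) \<and> (c \<in> A w \<longleftrightarrow> c \<in> L w)"
      by blast
    have "int (\<Sum>w\<in>V. t w) = (\<Sum>w\<in>V. f w)"
      unfolding of_nat_sum t_def using fnn by (intro sum.cong) auto
    moreover have "(\<Sum>w\<in>V. f w) \<ge> 0" using fnn by (simp add: sum_nonneg)
    ultimately have tot: "(\<Sum>w\<in>V. t w) + 1 = card D" using sf gf(4) by linarith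
    define F where "F = (\<lambda>x. x - c) ` (\<Union>v\<in>V. L v)"
    have finF: "finite F" unfolding F_def using gf(1) Lfin by auto
    define M where "M = Max (insert 0 F) + 1"
    have Mpos: "M > 0" proof -
      have "0 \<le> Max (insert 0 F)" using finF by simp
      then show ?thesis unfolding M_def by simp
    qed
    have notL: "c + M \<notin> L v" if "v \<in> V" for v
    proof
      assume "c + M \<in> L v"
      then have "M \<in> F" unfolding F_def using that by force
      then have "M \<le> Max (insert 0 F)" using finF by simp
      then show False unfolding M_def by simp
    qed
    define g where "g x = (if x = c then c + M else x)" for x
    define A' where "A' v = g ` A v" for v
    have injg: "inj_on g (A v)" if "v \<in> V" for v
      using A notL that unfolding g_def inj_on_def by (metis subsetD)
    have A'props: "\<forall>v\<in>V. finite (A' v) \<and> card (A' v) = Suc (t v)"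
      using A injg unfolding A'_def by (simp add: card_image)
    have sA': "\<Sum>(A' v) = \<Sum>(A v) + M * real_of_int (chi L c v)" if v: "v \<in> V" for v
    proof -
      have "\<Sum>(A' v) = (\<Sum>x\<in>A v. x + (if x = c then M else 0))"
        unfolding A'_def sum.reindex[OF injg[OF v]] g_def by (intro sum.cong) auto
      also have "\<dots> = \<Sum>(A v) + (if c \<in> A v then M else 0)"
        using A v by (simp add: sum.distrib sum.delta')
      finally show ?thesis using A v by (simp add: chi_def)
    qed
    define h where "h y = (if y = c + M then c else y)" for y
    have A'c: "y \<noteq> c" if "v \<in> V" "y \<in> A' v" for v y
      using that Mpos unfolding A'_def g_def by auto
    have hL: "\<forall>v\<in>V. \<forall>y\<in>A' v. h y \<in> L v"
    proof (intro ballI)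
      fix v y assume v: "v \<in> V" and y: "y \<in> A' v"
      then obtain x where x: "x \<in> A v" "y = g x" unfolding A'_def by auto
      have "x \<in> L v" using x A v by auto
      then show "h y \<in> L v" using x notL[OF v] unfolding g_def h_def by auto
    qed
    have hinj: "inj_on h (\<Union>v\<in>V. A' v)"
      unfolding inj_on_def h_def using A'c by auto
    have nc: "\<forall>a\<in>PiE V A. \<exists>p\<in>D. a (fst p) = a (snd p)"
      by (rule nocol[OF G O nL, of A id]) (use A in auto)
    have nc': "\<forall>a\<in>PiE V A'. \<exists>p\<in>D. a (fst p) = a (snd p)"
      by (rule nocol[OF G O nL hL hinj])
    have e1: "(\<Sum>z\<in>V. k z * \<Sum>(A z)) = 0"
      unfolding k_def by (rule grid_one[OF gf(1) gf(3) gf(2) _ tot nc]) (use A in auto)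
    have e2: "(\<Sum>z\<in>V. k z * \<Sum>(A' z)) = 0"
      unfolding k_def by (rule grid_one[OF gf(1) gf(3) gf(2) A'props tot nc'])
    have "(\<Sum>z\<in>V. k z * \<Sum>(A' z)) = (\<Sum>z\<in>V. k z * \<Sum>(A z)) + M * (\<Sum>z\<in>V. k z * real_of_int (chi L c z))"
      by (simp add: sA' algebra_simps sum.distrib sum_distrib_left)
    then have "M * (\<Sum>z\<in>V. k z * real_of_int (chi L c z)) = 0" using e1 e2 by simp
    then have "(\<Sum>z\<in>V. k z * real_of_int (chi L c z)) = 0" using Mpos by simp
    then have "real_of_int (\<Sum>z\<in>V. coeff_mono V (\<lambda>u. f u + indic1 z u) (graph_poly D) * chi L c z) = 0"
      unfolding of_int_sum of_int_mult coeff k_def .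
    then show ?thesis by (simp only: of_int_eq_0_iff)
  qed
qed

end
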